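(* Let $q$ be a prime power and let $l$ be an odd prime coprime to $q$. Then either every monic irreducible factor of $x^{l}-1$ in $\mathbb{F}_{q^2}[x]$ is SCRIM, or $x-1$ is the only SCRIM factor of $x^{l}-1$ in $\mathbb{F}_{q^2}[x]$.
   Context: $\mathbb{F}_{q^2}$ is the finite field with $q^2$ elements. For $\alpha\in\mathbb{F}_{q^2}$ put $\bar\alpha=\alpha^q$, and for $f(x)=\sum_i f_ix^i$ put $\overline{f(x)}=\sum_i \bar f_i x^i$. For $f(x)$ with $f(0)\neq 0$, $f^*(x)=x^{\deg f}f(0)^{-1}f(1/x)$ and $f^\dagger(x)=\overline{f^*(x)}$. A polynomial is SCRIM if it is monic, irreducible over $\mathbb{F}_{q^2}$, has nonzero constant term, and satisfies $f=f^\dagger$. A SCRIM factor of $x^n-1$ is a SCRIM polynomial dividing $x^n-1$ in $\mathbb{F}_{q^2}[x]$. *)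

theory Defs
  imports "HOL-Computational_Algebra.Computational_Algebra"
begin

text \<open>The ambient field is a finite field of type 'a with CARD('a) = q^2.
  Conjugation: bar a = a^q.\<close>

definition conj_q :: "nat \<Rightarrow> 'a::field \<Rightarrow> 'a" where
  "conj_q q a = a ^ q"

definition poly_conj :: "nat \<Rightarrow> 'a::field poly \<Rightarrow> 'a poly" where
  "poly_conj q f = map_poly (conj_q q) f"

text \<open>f^*(x) = x^(deg f) f(0)^(-1) f(1/x); reflect_poly f = x^(deg f) f(1/x).\<close>
definition recip_star :: "'a::field poly \<Rightarrow> 'a poly" where
  "recip_star f = smult (inverse (coeff f 0)) (reflect_poly f)"

definition dagger :: "nat \<Rightarrow> 'a::field poly \<Rightarrow> 'a poly" where
  "dagger q f = poly_conj q (recip_star f)"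

definition SCRIM :: "nat \<Rightarrow> 'a::field poly \<Rightarrow> bool" where
  "SCRIM q f \<longleftrightarrow> lead_coeff f = 1 \<and> irreducible f \<and> coeff f 0 \<noteq> 0 \<and> f = dagger q f"

end

theory Submission
  imports Defs "HOL-Algebra.Algebraic_Closure_Type" "HOL-Number_Theory.Residues"
begin

hide_const (open) module.smult Polynomials.degree Polynomials.lead_coeff Divisibility.prime Divisibility.irreducible up_ring.monom up_ring.coeff

lemma map_poly_add_hom:
  assumes "h 0 = 0" "\<And>x y. h (x+y) = h x + h y"
  shows "map_poly h (p + q) = map_poly h p + map_poly h q"
  by (intro poly_eqI) (simp add: coeff_map_poly assms)

lemma map_poly_mult_hom:
  fixes h :: "'a::comm_ring_1 \<Rightarrow> 'b::comm_ring_1"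
  assumes h0: "h 0 = 0" and ha: "\<And>x y. h (x+y) = h x + h y" and hm: "\<And>x y. h (x*y) = h x * h y"
  shows "map_poly h (p * q) = map_poly h p * map_poly h q"
proof (induction p rule: pCons_induct)
  case 0 then show ?case by simp
next
  case (pCons a p)
  have "map_poly h (pCons a p * q) = map_poly h (smult a q + pCons 0 (p * q))" by simp
  also have "\<dots> = smult (h a) (map_poly h q) + pCons 0 (map_poly h p * map_poly h q)"
    by (simp add: h0 map_poly_add_hom[OF h0 ha] map_poly_smult[where f=h, OF h0 hm] map_poly_pCons[where f=h, OF h0] pCons.IH)
  also have "\<dots> = map_poly h (pCons a p) * map_poly h q" by (simp add: map_poly_pCons[where f=h, OF h0])
  finally show ?case .
qed

lemma map_poly_prod_hom:
  fixes h :: "'a::comm_ring_1 \<Rightarrow> 'b::comm_ring_1"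
  assumes h0: "h 0 = 0" and h1: "h 1 = 1" and ha: "\<And>x y. h (x+y) = h x + h y" and hm: "\<And>x y. h (x*y) = h x * h y"
  shows "map_poly h (\<Prod>i\<in>A. P i) = (\<Prod>i\<in>A. map_poly h (P i))"
proof (induction A rule: infinite_finite_induct)
  case (insert x F)
  then show ?case by (simp add: map_poly_mult_hom[OF h0 ha hm])
qed (auto simp: h1)

lemma ac_map_add: "map_poly to_ac (p + q) = map_poly to_ac p + map_poly to_ac q"
  by (rule map_poly_add_hom) auto
lemma ac_map_mult: "map_poly to_ac (p * q) = map_poly to_ac p * map_poly to_ac q"
  by (rule map_poly_mult_hom) auto
lemma ac_map_diff: "map_poly to_ac (p - q) = map_poly to_ac p - map_poly to_ac q"
  by (intro poly_eqI) (simp add: coeff_map_poly)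
lemma ac_map_degree [simp]: "degree (map_poly to_ac p) = degree p"
  by (rule degree_map_poly) auto

lemma ff_power_card:
  fixes x :: "'a :: {finite,field}"
  shows   "x ^ card (UNIV :: 'a set) = x"
proof (cases "x = 0")
  case False
  have "x * (\<Prod>y\<in>UNIV-{0}. x * y) = x * x ^ (card (UNIV :: 'a set) - 1) * \<Prod>(UNIV-{0})"
    by (simp add: prod.distrib mult_ac)
  also have "x * x ^ (card (UNIV :: 'a set) - 1) = x ^ Suc (card (UNIV :: 'a set) - 1)"
    by (subst power_Suc) auto
  also have "Suc (card (UNIV :: 'a set) - 1) = card (UNIV :: 'a set)"
    using finite_UNIV_card_ge_0[where ?'a = 'a] by simp
  also have "(\<Prod>y\<in>UNIV-{0}. x * y) = (\<Prod>y\<in>UNIV-{0}. y)"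
    by (rule prod.reindex_bij_witness[of _ "\<lambda>y. y / x" "\<lambda>y. x * y"]) (use False in auto)
  finally show ?thesis
    by simp
qed (use finite_UNIV_card_ge_0[where ?'a = 'a] in auto)

lemma char_ff:
  assumes card: "card (UNIV :: 'a::{finite,field} set) = q ^ 2"
    and p: "prime p" "k > 0" "q = p ^ k"
  shows "CHAR('a) = p"
proof -
  have pos: "CHAR('a) > 0" by (rule finite_imp_CHAR_pos) simp
  have pr: "prime CHAR('a)" using pos prime_CHAR_semidom by blast
  have "CHAR('a) dvd p ^ (k*2)" using CHAR_dvd_CARD[where 'a='a] card p by (simp add: power_mult)
  then have "CHAR('a) dvd p" using pr prime_dvd_power by blast
  then show ?thesis using pr p(1) by (simp add: primes_dvd_imp_eq)
qed



lemma ac_reflect: "map_poly to_ac (reflect_poly f) = reflect_poly (map_poly to_ac (f :: 'a::field poly))"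
  by (intro poly_eqI) (simp add: coeff_map_poly coeff_reflect_poly)

lemma ac_eval_mult: "poly (map_poly to_ac (p * q)) z = poly (map_poly to_ac p) z * poly (map_poly to_ac q) z"
  by (simp add: ac_map_mult)

lemma monic_dvd_eq:
  fixes a b :: "'a::field poly"
  assumes "lead_coeff a = 1" "lead_coeff b = 1" "a dvd b" "degree b \<le> degree a"
  shows "a = b"
proof -
  obtain h where h: "b = a * h" using assms(3) by blast
  have b0: "b \<noteq> 0" using assms(2) by auto
  then have a0: "a \<noteq> 0" and h0: "h \<noteq> 0" using h by auto
  have "degree b = degree a + degree h" using h a0 h0 by (simp add: degree_mult_eq)
  then have dh: "degree h = 0" using assms(4) by simp
  have "lead_coeff h = 1" using h assms(1,2) by (simp add: lead_coeff_mult)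
  then have "coeff h 0 = 1" using dh by simp
  then have "h = [:1:]" using degree_0_id[OF dh] by simp
  then have "h = 1" by (simp add: one_pCons)
  then show ?thesis using h by simp
qed

lemma shared_root:
  fixes f g :: "'a::field poly"
  assumes irr: "irreducible f" and fz: "poly (map_poly to_ac f) z = 0" and gz: "poly (map_poly to_ac g) z = 0"
  shows "f dvd g"
proof -
  define P where "P = (\<lambda>h::'a poly. h \<noteq> 0 \<and> poly (map_poly to_ac h) z = 0)"
  have f0: "f \<noteq> 0" using irr by auto
  have "P f" using f0 fz by (simp add: P_def)
  then obtain m where Pm: "P m" and mmin: "\<And>h. P h \<Longrightarrow> degree m \<le> degree h"
    using ex_has_least_nat[of P f degree] by blast
  have m0: "m \<noteq> 0" and mz: "poly (map_poly to_ac m) z = 0" using Pm by (auto simp: P_def)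
  have mdvd: "m dvd h" if hz: "poly (map_poly to_ac h) z = 0" for h
  proof (rule ccontr)
    assume nd: "\<not> m dvd h"
    then have r0: "h mod m \<noteq> 0" by (simp add: dvd_eq_mod_eq_0)
    have "poly (map_poly to_ac h) z = poly (map_poly to_ac (h div m * m + h mod m)) z" by simp
    also have "\<dots> = poly (map_poly to_ac (h div m)) z * poly (map_poly to_ac m) z + poly (map_poly to_ac (h mod m)) z"
      by (simp only: ac_map_add ac_map_mult poly_add poly_mult)
    finally have "poly (map_poly to_ac h) z = poly (map_poly to_ac (h div m)) z * poly (map_poly to_ac m) z + poly (map_poly to_ac (h mod m)) z" .
    then have "poly (map_poly to_ac (h mod m)) z = 0" using hz mz by simp
    then have "P (h mod m)" using r0 by (simp add: P_def)
    then have "degree m \<le> degree (h mod m)" by (rule mmin)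
    moreover have "degree (h mod m) < degree m" by (rule degree_mod_less'[OF m0 r0])
    ultimately show False by simp
  qed
  obtain c where fc: "f = m * c" using mdvd[OF fz] by blast
  have "\<not> m dvd 1"
  proof
    assume "m dvd 1"
    then obtain u where "1 = m * u" by blast
    then have "map_poly to_ac (m * u) = 1" by simp
    then have "poly (map_poly to_ac (m * u)) z = 1" by simp
    then show False using mz by (simp add: ac_map_mult)
  qed
  then have "c dvd 1" using Factorial_Ring.irreducibleD[OF irr fc] by blast
  then have "f dvd m" using fc by (simp add: mult_unit_dvd_iff)
  then show ?thesis using mdvd[OF gz] by (rule dvd_trans)
qed

lemma order_l:
  fixes z :: "'b::field"
  assumes "prime l" "z ^ l = 1" "z \<noteq> 1" "z ^ m = 1"
  shows "l dvd m"
proof (rule ccontr)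
  assume nd: "\<not> l dvd m"
  then have m0: "m \<noteq> 0" by (metis dvd_0_right)
  have "coprime l m" using nd assms(1) prime_imp_coprime by blast
  then have "gcd m l = 1" by (simp add: coprime_commute)
  then obtain x y where xy: "m * x = l * y + 1" using bezout_nat[OF m0, of l] by auto
  have "z ^ (m * x) = 1" using assms(4) by (simp add: power_mult)
  moreover have "z ^ (l * y + 1) = z" using assms(2) by (simp add: power_mult)
  ultimately show False using xy assms(3) by simp
qed

lemma pow_dvd_one:
  fixes z :: "'b::monoid_mult"
  assumes "z ^ l = 1" "l dvd m"
  shows "z ^ m = 1"
  using assms by (auto simp: power_mult)

lemma pow_mod:
  fixes z :: "'b::monoid_mult"
  assumes "z ^ l = 1"
  shows "z ^ a = z ^ (a mod l)"
proof -
  have "z ^ a = z ^ (l * (a div l) + a mod l)" by simp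
  also have "\<dots> = (z ^ l) ^ (a div l) * z ^ (a mod l)" by (simp only: power_add power_mult)
  also have "\<dots> = z ^ (a mod l)" using assms by simp
  finally show ?thesis .
qed

lemma pow_mod_eq:
  fixes z :: "'b::monoid_mult"
  assumes "z ^ l = 1" "a mod l = b mod l"
  shows "z ^ a = z ^ b"
  using pow_mod[OF assms(1), of a] pow_mod[OF assms(1), of b] assms(2) by simp

lemma range_ac:
  fixes c :: "'a::{finite,field} alg_closure"
  assumes "c ^ card (UNIV :: 'a set) = c"
  shows "c \<in> range to_ac"
proof (rule ccontr)
  assume nc: "c \<notin> range to_ac"
  define N where "N = card (UNIV :: 'a set)"
  have "card {0, 1::'a} \<le> N" unfolding N_def by (rule card_mono) auto
  then have N2: "N \<ge> 2" by simp
  define P where "P = monom (1::'a alg_closure) N - [:0, 1:]"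
  have cP: "coeff P N = 1" using N2 by (simp add: P_def coeff_pCons split: nat.splits)
  then have P0: "P \<noteq> 0" by auto
  have dP: "degree P \<le> N" unfolding P_def
    by (rule degree_diff_le) (use N2 in \<open>auto simp: degree_monom_le\<close>)
  have roots: "insert c (range to_ac) \<subseteq> {x. poly P x = 0}"
  proof -
    have "poly P c = 0" using assms by (simp add: P_def N_def poly_monom)
    moreover have "poly P (to_ac a) = 0" for a
      using arg_cong[OF ff_power_card[of a], of to_ac] by (simp add: P_def N_def poly_monom)
    ultimately show ?thesis by auto
  qed
  have c1: "card (insert c (range (to_ac :: 'a \<Rightarrow> _))) = N + 1"
    using nc by (simp add: card_image inj_to_ac N_def)
  have c2: "card (insert c (range (to_ac :: 'a \<Rightarrow> _))) \<le> card {x. poly P x = 0}"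
    by (rule card_mono[OF poly_roots_finite[OF P0] roots]) 
  have c3: "card {x. poly P x = 0} \<le> degree P" by (rule card_poly_roots_bound[OF P0])
  show False using c1 c2 c3 dP by linarith
qed


lemma root_unity:
  fixes f :: "'a::field poly"
  assumes "f dvd monom 1 l - 1" "poly (map_poly to_ac f) z = 0"
  shows "z ^ l = 1"
proof -
  obtain h where h: "monom 1 l - 1 = f * h" using assms(1) by blast
  have "poly (map_poly to_ac (monom 1 l - 1)) z = poly (map_poly to_ac f) z * poly (map_poly to_ac h) z"
    by (simp only: h ac_map_mult poly_mult)
  then have "poly (map_poly to_ac (monom 1 l - 1)) z = 0" using assms(2) by simp
  then show ?thesis by (simp add: ac_map_diff map_poly_monom poly_monom)
qed

lemma coeff0_nz:
  fixes f :: "'a::field poly"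
  assumes "f dvd monom 1 l - 1" "l > 0"
  shows "coeff f 0 \<noteq> 0"
proof
  assume c: "coeff f 0 = 0"
  obtain h where h: "monom 1 l - 1 = f * h" using assms(1) by blast
  have "poly (monom 1 l - 1) (0::'a) = poly f 0 * poly h 0" by (simp only: h poly_mult)
  then show False using c assms(2) by (simp add: poly_monom poly_0_coeff_0)
qed

lemma root_exists:
  fixes f :: "'a::field poly"
  assumes "irreducible f" "lead_coeff f = 1"
  shows "\<exists>z. poly (map_poly to_ac f) z = 0"
proof -
  have "degree f \<noteq> 0"
  proof
    assume d0: "degree f = 0"
    then have "coeff f 0 = 1" using assms(2) by simp
    then have "f = [:1:]" using degree_0_id[OF d0] by simp
    then have "f = 1" by (simp add: one_pCons)
    then show False using assms(1) by simp
  qed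
  then have "degree (map_poly to_ac f) > 0" by simp
  then show ?thesis by (rule alg_closed_imp_poly_has_root)
qed

lemma map_poly_neg_hom:
  fixes h :: "'a::comm_ring_1 \<Rightarrow> 'b::comm_ring_1"
  assumes h0: "h 0 = 0" and ha: "\<And>x y. h (x+y) = h x + h y"
  shows "h (- x) = - h x"
proof -
  have "h (-x) + h x = 0" using ha[of "-x" x] h0 by simp
  then show ?thesis by (simp add: eq_neg_iff_add_eq_0)
qed

context
  fixes q p k :: nat
  assumes card: "card (UNIV :: 'a::{finite,field} set) = q ^ 2"
    and pp: "prime p" and kpos: "k > 0" and qdef: "q = p ^ k"
begin

lemma charA: "CHAR('a) = p"
  using char_ff[OF card pp kpos qdef] .

lemma q_pos: "q > 0"
  using pp qdef prime_gt_0_nat by simp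

lemma frob_ac: "(x + y :: 'a alg_closure) ^ q = x ^ q + y ^ q"
proof -
  have "prime CHAR('a alg_closure)" using charA pp by simp
  moreover have "q = CHAR('a alg_closure) ^ k" using charA qdef by simp
  ultimately show ?thesis by (rule freshmans_dream')
qed

lemma frobQ_ac: "(x + y :: 'a alg_closure) ^ (q^2) = x ^ (q^2) + y ^ (q^2)"
proof -
  have "prime CHAR('a alg_closure)" using charA pp by simp
  moreover have "q^2 = CHAR('a alg_closure) ^ (k*2)" using charA qdef by (simp add: power_mult)
  ultimately show ?thesis by (rule freshmans_dream')
qed

lemma powQ_a: "(x::'a) ^ (q^2) = x"
  using ff_power_card[of x] card by simp

lemma conj_conj: "poly_conj q (poly_conj q (g :: 'a poly)) = g"
proof -
  have "conj_q q (conj_q q x) = x" for x :: 'a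
    unfolding conj_q_def using powQ_a[of x] by (simp add: power_mult[symmetric] power2_eq_square)
  moreover have "conj_q q (0::'a) = 0" using q_pos by (simp add: conj_q_def)
  ultimately show ?thesis
    unfolding poly_conj_def by (intro poly_eqI) (simp add: coeff_map_poly)
qed

lemma conj_pCons: "poly_conj q (pCons a g) = pCons (a ^ q) (poly_conj q (g :: 'a poly))"
proof -
  have "conj_q q (0::'a) = 0" using q_pos by (simp add: conj_q_def)
  then show ?thesis unfolding poly_conj_def by (simp add: map_poly_pCons conj_q_def)
qed

lemma eval_frob:
  "poly (map_poly to_ac g) z ^ q = poly (map_poly to_ac (poly_conj q (g :: 'a poly))) (z ^ q)"
proof (induction g rule: pCons_induct)
  case 0
  then show ?case using q_pos by (simp add: poly_conj_def)
next
  case (pCons a g)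
  have "poly (map_poly to_ac (pCons a g)) z ^ q = (to_ac a + z * poly (map_poly to_ac g) z) ^ q"
    by (simp add: map_poly_pCons)
  also have "\<dots> = to_ac a ^ q + z ^ q * poly (map_poly to_ac g) z ^ q"
    by (simp add: frob_ac power_mult_distrib)
  also have "\<dots> = poly (map_poly to_ac (poly_conj q (pCons a g))) (z ^ q)"
    using pCons.IH by (simp add: conj_pCons map_poly_pCons)
  finally show ?case .
qed

lemma eval_frob2:
  "poly (map_poly to_ac g) z ^ (q^2) = poly (map_poly to_ac (g :: 'a poly)) (z ^ (q^2))"
proof -
  have "poly (map_poly to_ac g) z ^ (q^2) = (poly (map_poly to_ac g) z ^ q) ^ q"
    by (simp add: power2_eq_square power_mult)
  also have "\<dots> = poly (map_poly to_ac (poly_conj q (poly_conj q g))) ((z ^ q) ^ q)"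
    by (simp add: eval_frob)
  also have "\<dots> = poly (map_poly to_ac g) (z ^ (q^2))"
    by (simp add: conj_conj power2_eq_square power_mult)
  finally show ?thesis .
qed

lemma eval_frob_iter:
  "poly (map_poly to_ac g) (z ^ ((q^2)^j)) = poly (map_poly to_ac (g :: 'a poly)) z ^ ((q^2)^j)"
proof (induction j)
  case 0
  then show ?case by simp
next
  case (Suc j)
  have "z ^ ((q^2) ^ Suc j) = (z ^ ((q^2)^j)) ^ (q^2)" by (simp only: power_Suc2 power_mult)
  then have "poly (map_poly to_ac g) (z ^ ((q^2) ^ Suc j)) = poly (map_poly to_ac g) (z ^ ((q^2)^j)) ^ (q^2)"
    by (simp add: eval_frob2)
  also have "\<dots> = poly (map_poly to_ac g) z ^ ((q^2) ^ Suc j)"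
    using Suc.IH by (simp add: power_mult[symmetric] mult.commute)
  finally show ?case .
qed

lemma dagger_eval:
  fixes f :: "'a poly"
  assumes "z \<noteq> 0"
  shows "poly (map_poly to_ac (dagger q f)) z ^ q
     = to_ac (inverse (coeff f 0)) * ((z ^ q) ^ degree f * poly (map_poly to_ac f) (inverse (z ^ q)))"
proof -
  have zq: "z ^ q \<noteq> 0" using assms by simp
  have "poly (map_poly to_ac (dagger q f)) z ^ q = poly (map_poly to_ac (recip_star f)) (z ^ q)"
    unfolding dagger_def by (simp add: eval_frob conj_conj)
  also have "\<dots> = to_ac (inverse (coeff f 0)) * poly (reflect_poly (map_poly to_ac f)) (z ^ q)"
    unfolding recip_star_def by (simp add: map_poly_smult ac_reflect[symmetric])
  also have "\<dots> = to_ac (inverse (coeff f 0)) * ((z ^ q) ^ degree f * poly (map_poly to_ac f) (inverse (z ^ q)))"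
    using zq by (simp add: poly_reflect_poly_nz)
  finally show ?thesis .
qed

lemma dagger_deg_lead:
  fixes f :: "'a poly"
  assumes "coeff f 0 \<noteq> 0"
  shows "degree (dagger q f) = degree f" "lead_coeff (dagger q f) = 1"
proof -
  have nz: "conj_q q x \<noteq> 0" if "x \<noteq> 0" for x :: 'a using that by (simp add: conj_q_def)
  have z: "conj_q q (0::'a) = 0" using q_pos by (simp add: conj_q_def)
  have dr: "degree (recip_star f) = degree f" using assms by (simp add: recip_star_def)
  show dd: "degree (dagger q f) = degree f"
    unfolding dagger_def poly_conj_def using nz dr by (simp add: degree_map_poly)
  have "lead_coeff (recip_star f) = 1" using assms
    by (simp add: recip_star_def coeff_reflect_poly)
  then show "lead_coeff (dagger q f) = 1"
    using dd dr z unfolding dagger_def poly_conj_def by (simp add: coeff_map_poly conj_q_def)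
qed
lemma partB:
  fixes f :: "'a poly" and l :: nat
  assumes lprime: "prime l" and cop: "coprime l q" and notP: "\<not> (\<exists>m. odd m \<and> l dvd q ^ m + 1)"
    and sc: "SCRIM q f" and fdvd: "f dvd monom 1 l - 1"
  shows "f = [:-1, 1:]"
proof (rule ccontr)
  assume fne: "f \<noteq> [:-1, 1:]"
  have lead: "lead_coeff f = 1" and irr: "irreducible f" and c0: "coeff f 0 \<noteq> 0"
    and fd: "f = dagger q f" using sc by (auto simp: SCRIM_def)
  have lpos: "l > 0" using lprime prime_gt_0_nat by blast
  define Q where "Q = q^2"
  have Qpos: "Q > 0" using q_pos by (simp add: Q_def)
  obtain z where fz: "poly (map_poly to_ac f) z = 0" using root_exists[OF irr lead] by blast
  have zl: "z ^ l = 1" by (rule root_unity[OF fdvd fz])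
  have z0: "z \<noteq> 0" using zl lpos by (metis power_0_left zero_neq_one neq0_conv)
  have f0: "f \<noteq> 0" using irr by auto
  have degf: "degree f \<noteq> 0"
  proof
    assume d0: "degree f = 0"
    then have "coeff f 0 = 1" using lead by simp
    then have "f = [:1:]" using degree_0_id[OF d0] by simp
    then have "f = 1" by (simp add: one_pCons)
    then show False using irr by simp
  qed
  have z1: "z \<noteq> 1"
  proof
    assume "z = 1"
    then have "poly (map_poly to_ac [:-1, 1:]) z = (0 :: 'a alg_closure)" by (simp add: map_poly_pCons)
    then have "f dvd [:-1, 1:]" by (rule shared_root[OF irr fz])
    then have "f = [:-1, 1:]" using monic_dvd_eq[OF lead] degf by simp
    then show False using fne by simp
  qed
  define w where "w = inverse (z ^ q)"
  have fw: "poly (map_poly to_ac f) w = 0"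
  proof -
    have "poly (map_poly to_ac (dagger q f)) z = 0" unfolding fd[symmetric] by (rule fz)
    then have "poly (map_poly to_ac (dagger q f)) z ^ q = 0" using q_pos by simp
    then have "to_ac (inverse (coeff f 0)) * ((z ^ q) ^ degree f * poly (map_poly to_ac f) (inverse (z ^ q))) = 0"
      using dagger_eval[OF z0, of f] by simp
    then show ?thesis using c0 z0 by (simp add: w_def)
  qed
  have wz: "w * z ^ q = 1" using z0 by (simp add: w_def)
  define S where "S = range (\<lambda>j. z ^ (Q ^ j))"
  have zS: "z \<in> S" unfolding S_def by (rule range_eqI[of _ _ 0]) simp
  have Sunit: "S \<subseteq> {x. poly (monom 1 l - 1) x = 0}"
  proof
    fix x assume "x \<in> S"
    then obtain j where "x = z ^ (Q ^ j)" by (auto simp: S_def)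
    then have "x ^ l = (z ^ l) ^ (Q ^ j)" by (simp add: power_mult[symmetric] mult.commute)
    then show "x \<in> {x. poly (monom 1 l - 1) x = 0}" using zl by (simp add: poly_monom)
  qed
  have "monom (1::'a alg_closure) l - 1 \<noteq> 0"
  proof
    assume "monom (1::'a alg_closure) l - 1 = 0"
    then have "coeff (monom (1::'a alg_closure) l - 1) l = 0" by simp
    then show False using lpos by simp
  qed
  then have finS: "finite S" using Sunit poly_roots_finite finite_subset by blast
  have Sroots: "S \<subseteq> {x. poly (map_poly to_ac f) x = 0}"
  proof
    fix x assume "x \<in> S"
    then obtain j where "x = z ^ (Q ^ j)" by (auto simp: S_def)
    then show "x \<in> {x. poly (map_poly to_ac f) x = 0}"
      using fz Qpos by (simp add: Q_def eval_frob_iter)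
  qed
  have wS: "w \<notin> S"
  proof
    assume "w \<in> S"
    then obtain j where wj: "w = z ^ (Q ^ j)" by (auto simp: S_def)
    have "z ^ (Q ^ j + q) = 1" using wz wj by (simp add: power_add)
    then have ld: "l dvd Q ^ j + q" by (rule order_l[OF lprime zl z1])
    show False
    proof (cases j)
      case 0
      then have "l dvd q ^ 1 + 1" using ld by (simp add: add.commute)
      then have "odd (1::nat) \<and> l dvd q ^ 1 + 1" by simp
      then have "\<exists>m. odd m \<and> l dvd q ^ m + 1" by (rule exI)
      then show False using notP by (rule notE[rotated])
    next
      case (Suc i)
      have sm: "2 * Suc i = Suc (2 * i + 1)" by simp
      have "Q ^ j = q ^ Suc (2 * i + 1)" by (simp only: Q_def Suc power_mult[symmetric] sm)
      then have e: "Q ^ j + q = q * (q ^ (2 * i + 1) + 1)" by (simp add: algebra_simps)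
      have "l dvd q * (q ^ (2 * i + 1) + 1)" using ld unfolding e .
      then have "l dvd q ^ (2 * i + 1) + 1" unfolding coprime_dvd_mult_right_iff[OF cop] .
      then have "odd (2 * i + 1) \<and> l dvd q ^ (2 * i + 1) + 1" by simp
      then have "\<exists>m. odd m \<and> l dvd q ^ m + 1" by (rule exI)
      then show False using notP by (rule notE[rotated])
    qed
  qed
  define phi where "phi = (\<lambda>c::'a alg_closure. c ^ Q)"
  have phi0: "phi 0 = 0" using Qpos by (simp add: phi_def)
  have phi1: "phi 1 = 1" by (simp add: phi_def)
  have phia: "phi (x + y) = phi x + phi y" for x y by (simp add: phi_def Q_def frobQ_ac)
  have phim: "phi (x * y) = phi x * phi y" for x y by (simp add: phi_def power_mult_distrib)
  have phiS: "phi ` S = S"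
  proof
    show "phi ` S \<subseteq> S"
    proof
      fix x assume "x \<in> phi ` S"
      then obtain j where "x = phi (z ^ (Q ^ j))" by (auto simp: S_def)
      then have "x = z ^ (Q ^ Suc j)" by (simp add: phi_def power_mult[symmetric] mult.commute)
      then show "x \<in> S" unfolding S_def by (rule range_eqI)
    qed
  next
    show "S \<subseteq> phi ` S"
    proof
      fix x assume "x \<in> S"
      then obtain j where xj: "x = z ^ (Q ^ j)" by (auto simp: S_def)
      have nd: "\<not> l dvd Q"
      proof
        assume "l dvd Q"
        then have "l dvd q * q" by (simp add: Q_def power2_eq_square)
        then have "l dvd q" unfolding coprime_dvd_mult_right_iff[OF cop] .
        then have "is_unit l" using coprime_common_divisor[OF cop dvd_refl] by blast
        then show False using lprime by simp
      qed
      have "[Q ^ (l - 1) = 1] (mod l)" by (rule fermat_theorem[OF lprime nd])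
      then have "[Q ^ j * Q ^ (l - 1) = Q ^ j * 1] (mod l)" by (intro cong_mult cong_refl)
      then have "(Q ^ (j + (l - 1))) mod l = (Q ^ j) mod l" by (simp add: cong_def power_add)
      then have X: "z ^ (Q ^ (j + (l - 1))) = x" using xj pow_mod_eq[OF zl] by blast
      define n where "n = l - 2"
      have ln: "l - 1 = Suc n" using prime_ge_2_nat[OF lprime] by (simp add: n_def)
      have X': "z ^ (Q ^ (j + Suc n)) = x" using X unfolding ln .
      have "x = z ^ (Q ^ (j + Suc n))" using X' by (rule sym)
      also have "z ^ (Q ^ (j + Suc n)) = phi (z ^ (Q ^ (j + n)))"
        by (simp add: phi_def power_mult[symmetric] mult.commute)
      finally have "x = phi (z ^ (Q ^ (j + n)))" .
      then show "x \<in> phi ` S" unfolding S_def by (rule image_eqI[OF _ rangeI])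
    qed
  qed
  have injphi: "inj_on phi S" using finS phiS by (intro eq_card_imp_inj_on) simp_all
  define G where "G = (\<Prod>s\<in>S. [:-s, 1:])"
  have "map_poly phi G = (\<Prod>s\<in>S. map_poly phi [:-s, 1:])"
    unfolding G_def by (rule map_poly_prod_hom[OF phi0 phi1 phia phim])
  also have "\<dots> = (\<Prod>s\<in>S. [:-phi s, 1:])"
    using map_poly_neg_hom[of phi, OF phi0 phia] phi0 phi1 by (simp add: map_poly_pCons)
  also have "\<dots> = (\<Prod>s\<in>phi ` S. [:-s, 1:])"
    using prod.reindex[OF injphi, of "\<lambda>s. [:-s, 1:]"] by simp
  also have "\<dots> = G" by (simp add: phiS G_def)
  finally have Gfix: "map_poly phi G = G" .
  have crange: "coeff G i \<in> range to_ac" for i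
  proof -
    have "coeff G i ^ Q = coeff G i" using arg_cong[OF Gfix, of "\<lambda>p. coeff p i"] phi0
      by (simp add: coeff_map_poly phi_def)
    then show ?thesis using card by (intro range_ac) (simp add: Q_def)
  qed
  define g where "g = map_poly of_ac G"
  have Gg: "map_poly to_ac g = G"
    unfolding g_def by (intro poly_eqI) (simp add: coeff_map_poly to_ac_of_ac[OF crange])
  have G0: "G \<noteq> 0" unfolding G_def using finS by (simp add: prod_zero_iff)
  have gz: "poly (map_poly to_ac g) z = 0" unfolding Gg G_def using finS zS
    by (simp add: poly_prod prod_zero_iff)
  have "f dvd g" by (rule shared_root[OF irr fz gz])
  moreover have g0: "g \<noteq> 0" using Gg G0 by auto
  ultimately have "degree f \<le> degree g" by (rule dvd_imp_degree_le)
  also have "degree g = degree G" using Gg by (metis ac_map_degree)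
  also have "degree G = card S" unfolding G_def
    by (subst degree_prod_eq_sum_degree) auto
  finally have dfS: "degree f \<le> card S" .
  have F0: "map_poly to_ac f \<noteq> 0"
  proof
    assume "map_poly to_ac f = 0"
    then have "coeff (map_poly to_ac f) (degree f) = 0" by simp
    then show False using f0 by (simp add: coeff_map_poly)
  qed
  have "card (insert w S) \<le> card {x. poly (map_poly to_ac f) x = 0}"
    using Sroots fw by (intro card_mono poly_roots_finite F0) auto
  also have "\<dots> \<le> degree (map_poly to_ac f)" by (rule card_poly_roots_bound[OF F0])
  finally have "card (insert w S) \<le> degree f" by simp
  moreover have "card (insert w S) = card S + 1" using finS wS by simp
  ultimately show False using dfS by simp
qed

lemma partA:
  fixes f :: "'a poly" and l m :: nat
  assumes lprime: "prime l" and cop: "coprime l q" and modd: "odd m" and ldvd: "l dvd q ^ m + 1"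
    and lead: "lead_coeff f = 1" and irr: "irreducible f" and fdvd: "f dvd monom 1 l - 1"
  shows "SCRIM q f"
proof -
  have lpos: "l > 0" using lprime prime_gt_0_nat by blast
  have c0: "coeff f 0 \<noteq> 0" by (rule coeff0_nz[OF fdvd lpos])
  obtain z where fz: "poly (map_poly to_ac f) z = 0" using root_exists[OF irr lead] by blast
  have zl: "z ^ l = 1" by (rule root_unity[OF fdvd fz])
  have z0: "z \<noteq> 0" using zl lpos by (metis power_0_left zero_neq_one neq0_conv)
  obtain j where mj: "m = 2 * j + 1" using modd oddE by blast
  have sm: "Suc m = 2 * (j+1)" using mj by simp
  have "(q^2)^(j+1) = q ^ Suc m" by (simp only: sm power_mult)
  then have e: "(q^2)^(j+1) + q = q * (q ^ m + 1)" by (simp add: algebra_simps)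
  have ldvd2: "l dvd (q^2)^(j+1) + q" unfolding e using ldvd by (rule dvd_mult)
  define w where "w = z ^ ((q^2)^(j+1))"
  have fw: "poly (map_poly to_ac f) w = 0" unfolding w_def eval_frob_iter using fz q_pos by simp
  have "w * z ^ q = z ^ ((q^2)^(j+1) + q)" by (simp add: w_def power_add)
  also have "\<dots> = 1" by (rule pow_dvd_one[OF zl ldvd2])
  finally have "inverse (z ^ q) = w" by (simp add: field_simps z0)
  then have "poly (map_poly to_ac (dagger q f)) z ^ q = 0"
    using dagger_eval[OF z0, of f] fw by simp
  then have dz: "poly (map_poly to_ac (dagger q f)) z = 0" using q_pos by simp
  have "f dvd dagger q f" by (rule shared_root[OF irr fz dz])
  then have "f = dagger q f"
    using monic_dvd_eq[OF lead dagger_deg_lead(2)[OF c0]] dagger_deg_lead(1)[OF c0] by simp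
  then show ?thesis using lead irr c0 by (simp add: SCRIM_def)
qed


end

theorem proposition2p3:
  fixes q l :: nat
  assumes card: "card (UNIV :: 'a::{finite,field} set) = q ^ 2"
    and qpp: "\<exists>p k. prime p \<and> k > 0 \<and> q = p ^ k"
    and lprime: "prime l" and lodd: "odd l" and cop: "coprime l q"
  shows "(\<forall>f :: 'a poly. lead_coeff f = 1 \<and> irreducible f \<and> f dvd (monom 1 l - 1)
            \<longrightarrow> SCRIM q f)
       \<or> (\<forall>f :: 'a poly. SCRIM q f \<and> f dvd (monom 1 l - 1) \<longrightarrow> f = [:-1, 1:])"
proof -
  obtain p k where pk: "prime p" "k > 0" "q = p ^ k" using qpp by blast
  show ?thesis
  proof (cases "\<exists>m. odd m \<and> l dvd q ^ m + 1")
    case True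
    then obtain m where m: "odd m" "l dvd q ^ m + 1" by blast
    have "\<forall>f :: 'a poly. lead_coeff f = 1 \<and> irreducible f \<and> f dvd (monom 1 l - 1) \<longrightarrow> SCRIM q f"
      using partA[OF card pk lprime cop m] by blast
    then show ?thesis by (rule disjI1)
  next
    case False
    have "\<forall>f :: 'a poly. SCRIM q f \<and> f dvd (monom 1 l - 1) \<longrightarrow> f = [:-1, 1:]"
      using partB[OF card pk lprime cop False] by blast
    then show ?thesis by (rule disjI2)
  qed
qed

end
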